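(* Let $G$ be an amenable (discrete) group, let $(X,u)$ and $(Y,v)$ be $G$-spaces, and assume $X$ is $G$-complemented in its bidual. Then every $G$-centralizer $\Omega:Y\curvearrowright X$ is at bounded distance from a $G$-equivariant quasi-linear map $\omega:Y_{00}\to X_\infty$ (defined on the same $Y_{00}$, with values in the same $X_\infty$). If moreover $\Omega$ is linear, then $\omega$ can be chosen linear.
   Context: Let $G$ be a semigroup. A $G$-space is a Banach space $X$ with a bounded action $g\mapsto u(g)\in\mathcal L(X)$ ($u(gh)=u(g)u(h)$, $\sup_g\|u(g)\|<\infty$). A linear map $T$ between $G$-spaces $(X,u)$, $(Y,v)$ is $G$-equivariant if $Tu(g)=v(g)T$ for all $g$. A quasi-linear map $\Omega:Y\curvearrowright X$ between $G$-spaces $(Y,v)$ and $(X,u)$ is a homogeneous map $\Omega:Y_{00}\to X_\infty$, where $Y_{00}\subseteq Y$ is a dense linear subspace with $v(g)Y_{00}\subseteq Y_{00}$ for all $g$, and $X_\infty\supseteq X$ is a vector space to which the action $u$ extends as an action by linear maps (still written $u(g)$), such that for some $C$ and all $y,y'\in Y_{00}$: $\Omega(y+y')-\Omega y-\Omega y'\in X$ and $\|\Omega(y+y')-\Omega y-\Omega y'\|_X\le C(\|y\|_Y+\|y'\|_Y)$. $\Omega$ is a $G$-centralizer if there is $C$ with $u(g)\Omega y-\Omega v(g)y\in X$ and $\|u(g)\Omega y-\Omega v(g)y\|_X\le C\|y\|_Y$ for all $g\in G$, $y\in Y_{00}$; it is $G$-equivariant if $u(g)\Omega y=\Omega v(g)y$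 for all $g\in G$, $y\in Y_{00}$. Two maps $\Omega_1,\Omega_2:Y_{00}\to X_\infty$ are at bounded distance (boundedly equivalent) if $\Omega_1y-\Omega_2y\in X$ and $\|\Omega_1y-\Omega_2y\|_X\le C\|y\|_Y$ for all $y\in Y_{00}$. A $G$-space $(X,u)$ is $G$-complemented in its bidual if there is a bounded linear projection $P$ of $X^{**}$ onto (the canonical copy of) $X$ with $Pu(g)^{**}=u(g)P$ for all $g\in G$. *)

theory Defs
  imports "HOL-Analysis.Analysis" "HOL-Algebra.Group"
begin

definition left_invariant_mean :: "('g, 'b) monoid_scheme \<Rightarrow> (('g \<Rightarrow> real) \<Rightarrow> real) \<Rightarrow> bool" where
  "left_invariant_mean G m \<longleftrightarrow>
     (\<forall>f f' a b. bounded (f ` carrier G) \<longrightarrow> bounded (f' ` carrier G) \<longrightarrow>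
        m (\<lambda>x. a * f x + b * f' x) = a * m f + b * m f') \<and>
     (\<forall>f f'. bounded (f ` carrier G) \<longrightarrow> (\<forall>x\<in>carrier G. f x = f' x) \<longrightarrow> m f = m f') \<and>
     (\<forall>f. bounded (f ` carrier G) \<longrightarrow> (\<forall>x\<in>carrier G. 0 \<le> f x) \<longrightarrow> 0 \<le> m f) \<and>
     m (\<lambda>_. 1) = 1 \<and>
     (\<forall>f. \<forall>g\<in>carrier G. bounded (f ` carrier G) \<longrightarrow> m (\<lambda>x. f (g \<otimes>\<^bsub>G\<^esub> x)) = m f)"

definition amenable :: "('g, 'b) monoid_scheme \<Rightarrow> bool" where
  "amenable G \<longleftrightarrow> group G \<and> (\<exists>m. left_invariant_mean G m)"

definition G_space :: "('g, 'b) monoid_scheme \<Rightarrow> ('g \<Rightarrow> ('x::real_normed_vector \<Rightarrow>\<^sub>L 'x)) \<Rightarrow> bool" where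
  "G_space G u \<longleftrightarrow>
     (\<forall>g\<in>carrier G. \<forall>h\<in>carrier G. u (g \<otimes>\<^bsub>G\<^esub> h) = u g o\<^sub>L u h) \<and>
     (\<exists>K. \<forall>g\<in>carrier G. norm (u g) \<le> K)"

definition dual_map :: "('a::real_normed_vector \<Rightarrow>\<^sub>L 'b::real_normed_vector) \<Rightarrow> (('b \<Rightarrow>\<^sub>L real) \<Rightarrow>\<^sub>L ('a \<Rightarrow>\<^sub>L real))" where
  "dual_map T = Blinfun (\<lambda>f. f o\<^sub>L T)"

definition bidual_embed :: "'a::real_normed_vector \<Rightarrow> (('a \<Rightarrow>\<^sub>L real) \<Rightarrow>\<^sub>L real)" where
  "bidual_embed x = Blinfun (\<lambda>f. blinfun_apply f x)"

text \<open>X is G-complemented in its bidual: a bounded projection P of X** onto (the canonical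
  copy of) X, written as a bounded map X** \<rightarrow> X restricting to the identity on X,
  with P u(g)** = u(g) P.\<close>
definition G_complemented_in_bidual :: "('g, 'b) monoid_scheme \<Rightarrow> ('g \<Rightarrow> ('x::real_normed_vector \<Rightarrow>\<^sub>L 'x)) \<Rightarrow> bool" where
  "G_complemented_in_bidual G u \<longleftrightarrow>
     (\<exists>P :: ((('x \<Rightarrow>\<^sub>L real) \<Rightarrow>\<^sub>L real) \<Rightarrow>\<^sub>L 'x).
        (\<forall>x. blinfun_apply P (bidual_embed x) = x) \<and>
        (\<forall>g\<in>carrier G. P o\<^sub>L dual_map (dual_map (u g)) = u g o\<^sub>L P))"

text \<open>X_\<infinity>: a real vector space 'z containing X via the injective linear map \<iota>,
  with an action U by linear maps extending u.\<close>
definition extended_action ::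
  "('g, 'b) monoid_scheme \<Rightarrow> ('g \<Rightarrow> ('x::real_normed_vector \<Rightarrow>\<^sub>L 'x)) \<Rightarrow> ('x \<Rightarrow> 'z::real_vector) \<Rightarrow> ('g \<Rightarrow> 'z \<Rightarrow> 'z) \<Rightarrow> bool" where
  "extended_action G u \<iota> U \<longleftrightarrow>
     linear \<iota> \<and> inj \<iota> \<and>
     (\<forall>g\<in>carrier G. linear (U g)) \<and>
     (\<forall>g\<in>carrier G. \<forall>h\<in>carrier G. U (g \<otimes>\<^bsub>G\<^esub> h) = U g \<circ> U h) \<and>
     (\<forall>g\<in>carrier G. \<forall>x. U g (\<iota> x) = \<iota> (u g x))"

definition admissible_domain :: "('g, 'b) monoid_scheme \<Rightarrow> ('g \<Rightarrow> ('y::real_normed_vector \<Rightarrow>\<^sub>L 'y)) \<Rightarrow> 'y set \<Rightarrow> bool" where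
  "admissible_domain G v Y00 \<longleftrightarrow>
     subspace Y00 \<and> closure Y00 = UNIV \<and> (\<forall>g\<in>carrier G. \<forall>y\<in>Y00. v g y \<in> Y00)"

definition in_X_le :: "('x::real_normed_vector \<Rightarrow> 'z) \<Rightarrow> 'z \<Rightarrow> real \<Rightarrow> bool" where
  "in_X_le \<iota> z c \<longleftrightarrow> (\<exists>x. \<iota> x = z \<and> norm x \<le> c)"

definition homogeneous_on :: "'y::real_vector set \<Rightarrow> ('y \<Rightarrow> 'z::real_vector) \<Rightarrow> bool" where
  "homogeneous_on Y00 \<Omega> \<longleftrightarrow> (\<forall>r. \<forall>y\<in>Y00. \<Omega> (r *\<^sub>R y) = r *\<^sub>R \<Omega> y)"

definition linear_on :: "'y::real_vector set \<Rightarrow> ('y \<Rightarrow> 'z::real_vector) \<Rightarrow> bool" where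
  "linear_on Y00 \<Omega> \<longleftrightarrow> (\<forall>a b. \<forall>y\<in>Y00. \<forall>y'\<in>Y00. \<Omega> (a *\<^sub>R y + b *\<^sub>R y') = a *\<^sub>R \<Omega> y + b *\<^sub>R \<Omega> y')"

definition quasi_linear ::
  "('x::real_normed_vector \<Rightarrow> 'z::real_vector) \<Rightarrow> 'y::real_normed_vector set \<Rightarrow> ('y \<Rightarrow> 'z) \<Rightarrow> bool" where
  "quasi_linear \<iota> Y00 \<Omega> \<longleftrightarrow>
     homogeneous_on Y00 \<Omega> \<and>
     (\<exists>C. \<forall>y\<in>Y00. \<forall>y'\<in>Y00. in_X_le \<iota> (\<Omega> (y + y') - \<Omega> y - \<Omega> y') (C * (norm y + norm y')))"

definition G_centralizer ::
  "('g, 'b) monoid_scheme \<Rightarrow> ('x::real_normed_vector \<Rightarrow> 'z::real_vector) \<Rightarrow> ('g \<Rightarrow> 'z \<Rightarrow> 'z) \<Rightarrow>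
   ('g \<Rightarrow> ('y::real_normed_vector \<Rightarrow>\<^sub>L 'y)) \<Rightarrow> 'y set \<Rightarrow> ('y \<Rightarrow> 'z) \<Rightarrow> bool" where
  "G_centralizer G \<iota> U v Y00 \<Omega> \<longleftrightarrow>
     (\<exists>C. \<forall>g\<in>carrier G. \<forall>y\<in>Y00. in_X_le \<iota> (U g (\<Omega> y) - \<Omega> (v g y)) (C * norm y))"

definition G_equivariant_map ::
  "('g, 'b) monoid_scheme \<Rightarrow> ('g \<Rightarrow> 'z \<Rightarrow> 'z) \<Rightarrow> ('g \<Rightarrow> ('y::real_normed_vector \<Rightarrow>\<^sub>L 'y)) \<Rightarrow> 'y set \<Rightarrow> ('y \<Rightarrow> 'z) \<Rightarrow> bool" where
  "G_equivariant_map G U v Y00 \<Omega> \<longleftrightarrow> (\<forall>g\<in>carrier G. \<forall>y\<in>Y00. U g (\<Omega> y) = \<Omega> (v g y))"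

definition bounded_distance ::
  "('x::real_normed_vector \<Rightarrow> 'z::real_vector) \<Rightarrow> 'y::real_normed_vector set \<Rightarrow> ('y \<Rightarrow> 'z) \<Rightarrow> ('y \<Rightarrow> 'z) \<Rightarrow> bool" where
  "bounded_distance \<iota> Y00 \<Omega>1 \<Omega>2 \<longleftrightarrow> (\<exists>C. \<forall>y\<in>Y00. in_X_le \<iota> (\<Omega>1 y - \<Omega>2 y) (C * norm y))"

end

theory Submission
  imports Defs
begin

lemma dual_map_apply: "blinfun_apply (dual_map T) f = f o\<^sub>L T"
  unfolding dual_map_def
  by (simp add: bounded_linear_Blinfun_apply bounded_bilinear.bounded_linear_left[OF bounded_bilinear_blinfun_compose])

lemma bidual_embed_apply: "blinfun_apply (bidual_embed x) f = f x"
  unfolding bidual_embed_def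
  by (simp add: bounded_linear_Blinfun_apply blinfun.bounded_linear_left)

lemma bounded_on_carrier: "(\<forall>x\<in>A. \<bar>f x\<bar> \<le> (B::real)) \<Longrightarrow> bounded (f ` A)"
  unfolding bounded_iff real_norm_def by (rule exI[of _ B]) blast

lemma mean_bound:
  assumes m: "left_invariant_mean G m" and B: "\<forall>x\<in>carrier G. \<bar>f x\<bar> \<le> B"
  shows "\<bar>m f\<bar> \<le> B"
proof -
  have bf: "bounded (f ` carrier G)" using B by (rule bounded_on_carrier)
  have b1: "bounded ((\<lambda>_::'a. 1::real) ` carrier G)" by (rule bounded_on_carrier[of _ _ 1]) simp
  have lin: "\<And>a b. m (\<lambda>x. a * f x + b * 1) = a * m f + b"
  proof -
    fix a b
    have "m (\<lambda>x. a * f x + b * 1) = a * m f + b * m (\<lambda>_. 1)"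
      using m bf b1 unfolding left_invariant_mean_def by blast
    moreover have "m (\<lambda>_. 1) = 1" using m unfolding left_invariant_mean_def by blast
    ultimately show "m (\<lambda>x. a * f x + b * 1) = a * m f + b" by simp
  qed
  have pos: "\<And>h. bounded (h ` carrier G) \<Longrightarrow> (\<forall>x\<in>carrier G. 0 \<le> h x) \<Longrightarrow> 0 \<le> m h"
    using m unfolding left_invariant_mean_def by blast
  have bb: "bounded ((\<lambda>x. a * f x + b * 1) ` carrier G)" for a b
  proof (rule bounded_on_carrier[of _ _ "\<bar>a\<bar> * \<bar>B\<bar> + \<bar>b\<bar>"], intro ballI)
    fix x assume x: "x \<in> carrier G"
    have "\<bar>a * f x + b * 1\<bar> \<le> \<bar>a\<bar> * \<bar>f x\<bar> + \<bar>b\<bar>"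
      using abs_triangle_ineq[of "a * f x" b] by (simp add: abs_mult)
    moreover have "\<bar>f x\<bar> \<le> \<bar>B\<bar>" using B x by (meson abs_ge_self order_trans)
    hence "\<bar>a\<bar> * \<bar>f x\<bar> \<le> \<bar>a\<bar> * \<bar>B\<bar>" by (rule mult_left_mono) simp
    ultimately show "\<bar>a * f x + b * 1\<bar> \<le> \<bar>a\<bar> * \<bar>B\<bar> + \<bar>b\<bar>" by linarith
  qed
  have B': "\<And>x. x \<in> carrier G \<Longrightarrow> - B \<le> f x \<and> f x \<le> B" proof -
    fix x assume "x \<in> carrier G"
    hence "\<bar>f x\<bar> \<le> B" using B by blast
    thus "- B \<le> f x \<and> f x \<le> B" by (simp add: abs_le_iff)
  qed
  have "0 \<le> m (\<lambda>x. (-1) * f x + B * 1)"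
  proof (rule pos[OF bb], intro ballI)
    fix x assume "x \<in> carrier G"
    from B'[OF this] show "0 \<le> (-1) * f x + B * 1" by linarith
  qed
  moreover have "0 \<le> m (\<lambda>x. 1 * f x + B * 1)"
  proof (rule pos[OF bb], intro ballI)
    fix x assume "x \<in> carrier G"
    from B'[OF this] show "0 \<le> 1 * f x + B * 1" by linarith
  qed
  ultimately have h1: "0 \<le> -1 * m f + B" and h2: "0 \<le> 1 * m f + B"
    using lin[of "-1" B] lin[of 1 B] by simp_all
  have "m f \<le> B" using h1 by simp
  moreover have "- m f \<le> B" using h2 by simp
  ultimately show ?thesis by (rule abs_leI)
qed

lemma quasi_from_dist:
  assumes lin: "linear \<iota>" and sub: "subspace Y00" and hom: "homogeneous_on Y00 \<omega>"
    and q: "quasi_linear \<iota> Y00 \<Omega>" and d: "bounded_distance \<iota> Y00 \<Omega> \<omega>"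
  shows "quasi_linear \<iota> Y00 \<omega>"
proof -
  have "\<exists>C0. \<forall>y\<in>Y00. \<forall>y'\<in>Y00. in_X_le \<iota> (\<Omega> (y + y') - \<Omega> y - \<Omega> y') (C0 * (norm y + norm y'))"
    using q unfolding quasi_linear_def by (rule conjunct2)
  then obtain C0 where C0: "\<forall>y\<in>Y00. \<forall>y'\<in>Y00. in_X_le \<iota> (\<Omega> (y + y') - \<Omega> y - \<Omega> y') (C0 * (norm y + norm y'))"
    by (elim exE)
  obtain C1 where C1: "\<forall>y\<in>Y00. in_X_le \<iota> (\<Omega> y - \<omega> y) (C1 * norm y)"
    using d unfolding bounded_distance_def by (elim exE)
  have C1': "\<exists>e. \<iota> e = \<Omega> y - \<omega> y \<and> norm e \<le> \<bar>C1\<bar> * norm y" if "y \<in> Y00" for y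
  proof -
    have "in_X_le \<iota> (\<Omega> y - \<omega> y) (C1 * norm y)" using C1 that by blast
    then obtain e where e1: "\<iota> e = \<Omega> y - \<omega> y" and e2: "norm e \<le> C1 * norm y"
      unfolding in_X_le_def by (elim exE conjE)
    have "C1 * norm y \<le> \<bar>C1\<bar> * norm y" by (rule mult_right_mono[OF abs_ge_self norm_ge_zero])
    with e2 have "norm e \<le> \<bar>C1\<bar> * norm y" by (rule order_trans)
    with e1 show ?thesis by blast
  qed
  have "\<exists>C. \<forall>y\<in>Y00. \<forall>y'\<in>Y00. in_X_le \<iota> (\<omega> (y + y') - \<omega> y - \<omega> y') (C * (norm y + norm y'))"
  proof (rule exI[of _ "C0 + 2 * \<bar>C1\<bar>"], intro ballI)
    fix y y' assume y: "y \<in> Y00" and y': "y' \<in> Y00"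
    have yy: "y + y' \<in> Y00" using sub y y' by (simp add: subspace_add)
    obtain q where q: "\<iota> q = \<Omega> (y + y') - \<Omega> y - \<Omega> y'" "norm q \<le> C0 * (norm y + norm y')"
      using C0 y y' unfolding in_X_le_def by blast
    obtain e1 where e1: "\<iota> e1 = \<Omega> (y+y') - \<omega> (y+y')" "norm e1 \<le> \<bar>C1\<bar> * norm (y+y')" using C1' yy by blast
    obtain e2 where e2: "\<iota> e2 = \<Omega> y - \<omega> y" "norm e2 \<le> \<bar>C1\<bar> * norm y" using C1' y by blast
    obtain e3 where e3: "\<iota> e3 = \<Omega> y' - \<omega> y'" "norm e3 \<le> \<bar>C1\<bar> * norm y'" using C1' y' by blast
    have "\<iota> (q - e1 + e2 + e3) = \<iota> q - \<iota> e1 + \<iota> e2 + \<iota> e3"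
      by (simp only: linear_diff[OF lin] linear_add[OF lin])
    also have "\<dots> = \<omega> (y + y') - \<omega> y - \<omega> y'"
      unfolding q(1) e1(1) e2(1) e3(1) by (simp add: algebra_simps)
    finally have "\<iota> (q - e1 + e2 + e3) = \<omega> (y + y') - \<omega> y - \<omega> y'" .
    moreover have "norm (q - e1 + e2 + e3) \<le> (C0 + 2 * \<bar>C1\<bar>) * (norm y + norm y')"
    proof -
      have t1: "norm (q - e1) \<le> norm q + norm e1" by (rule norm_triangle_ineq4)
      have t2: "norm (q - e1 + e2) \<le> norm (q - e1) + norm e2" by (rule norm_triangle_ineq)
      have t3: "norm (q - e1 + e2 + e3) \<le> norm (q - e1 + e2) + norm e3" by (rule norm_triangle_ineq)
      have t: "norm (q - e1 + e2 + e3) \<le> norm q + norm e1 + norm e2 + norm e3" using t1 t2 t3 by linarith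
      have "\<bar>C1\<bar> * norm (y+y') \<le> \<bar>C1\<bar> * (norm y + norm y')"
        by (rule mult_left_mono[OF norm_triangle_ineq abs_ge_zero])
      moreover have "(C0 + 2 * \<bar>C1\<bar>) * (norm y + norm y') = C0 * (norm y + norm y') + \<bar>C1\<bar> * (norm y + norm y') + \<bar>C1\<bar> * norm y + \<bar>C1\<bar> * norm y'"
        by (simp add: algebra_simps)
      ultimately show ?thesis using t q(2) e1(2) e2(2) e3(2) by linarith
    qed
    ultimately show "in_X_le \<iota> (\<omega> (y + y') - \<omega> y - \<omega> y') ((C0 + 2 * \<bar>C1\<bar>) * (norm y + norm y'))"
      unfolding in_X_le_def by blast
  qed
  thus ?thesis using hom unfolding quasi_linear_def by blast
qed

theorem mainTheorem2:
  fixes G :: "('g, 'b) monoid_scheme"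
    and u :: "'g \<Rightarrow> ('x::banach \<Rightarrow>\<^sub>L 'x)"
    and v :: "'g \<Rightarrow> ('y::banach \<Rightarrow>\<^sub>L 'y)"
    and \<iota> :: "'x \<Rightarrow> 'z::real_vector"
    and U :: "'g \<Rightarrow> 'z \<Rightarrow> 'z"
    and Y00 :: "'y set"
    and \<Omega> :: "'y \<Rightarrow> 'z"
  assumes "amenable G"
    and "G_space G u" and "G_space G v"
    and "G_complemented_in_bidual G u"
    and "extended_action G u \<iota> U"
    and "admissible_domain G v Y00"
    and "quasi_linear \<iota> Y00 \<Omega>"
    and "G_centralizer G \<iota> U v Y00 \<Omega>"
  shows "(\<exists>\<omega>. quasi_linear \<iota> Y00 \<omega> \<and> G_equivariant_map G U v Y00 \<omega> \<and> bounded_distance \<iota> Y00 \<Omega> \<omega>)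
       \<and> (linear_on Y00 \<Omega> \<longrightarrow>
          (\<exists>\<omega>. quasi_linear \<iota> Y00 \<omega> \<and> linear_on Y00 \<omega> \<and> G_equivariant_map G U v Y00 \<omega>
               \<and> bounded_distance \<iota> Y00 \<Omega> \<omega>))"
proof -
  have grp: "group G" and "\<exists>m. left_invariant_mean G m" using assms(1) unfolding amenable_def by auto
  then obtain m where m: "left_invariant_mean G m" by blast
  interpret grp: group G by (rule grp)
  have m_lin: "\<And>f f' a b. bounded (f ` carrier G) \<Longrightarrow> bounded (f' ` carrier G) \<Longrightarrow>
      m (\<lambda>x. a * f x + b * f' x) = a * m f + b * m f'"
    using m unfolding left_invariant_mean_def by blast
  have m_cong: "\<And>f f'. bounded (f ` carrier G) \<Longrightarrow> (\<forall>x\<in>carrier G. f x = f' x) \<Longrightarrow> m f = m f'"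
    using m unfolding left_invariant_mean_def by blast
  have m_one: "m (\<lambda>_. 1) = 1"
    using m unfolding left_invariant_mean_def by blast
  have m_inv: "\<And>f g. g \<in> carrier G \<Longrightarrow> bounded (f ` carrier G) \<Longrightarrow> m (\<lambda>x. f (g \<otimes>\<^bsub>G\<^esub> x)) = m f"
    using m unfolding left_invariant_mean_def by blast
  have b_one: "bounded ((\<lambda>_::'g. 1::real) ` carrier G)" by (rule bounded_on_carrier[of _ _ 1]) simp

  obtain Ku0 where u_mult: "\<forall>g\<in>carrier G. \<forall>h\<in>carrier G. u (g \<otimes>\<^bsub>G\<^esub> h) = u g o\<^sub>L u h"
    and Ku0: "\<forall>g\<in>carrier G. norm (u g) \<le> Ku0"
    using assms(2) unfolding G_space_def by blast
  define Ku where "Ku = max Ku0 0"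
  have Ku: "norm (u g) \<le> Ku" if g: "g \<in> carrier G" for g
  proof -
    have "norm (u g) \<le> Ku0" using Ku0 g by blast
    thus ?thesis unfolding Ku_def by (rule max.coboundedI1)
  qed
  have Ku0': "0 \<le> Ku" unfolding Ku_def by (rule max.cobounded2)
  obtain Kv0 where v_mult: "\<forall>g\<in>carrier G. \<forall>h\<in>carrier G. v (g \<otimes>\<^bsub>G\<^esub> h) = v g o\<^sub>L v h"
    and Kv0: "\<forall>g\<in>carrier G. norm (v g) \<le> Kv0"
    using assms(3) unfolding G_space_def by blast
  define Kv where "Kv = max Kv0 0"
  have Kv: "norm (v g) \<le> Kv" if g: "g \<in> carrier G" for g
  proof -
    have "norm (v g) \<le> Kv0" using Kv0 g by blast
    thus ?thesis unfolding Kv_def by (rule max.coboundedI1)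
  qed
  have Kv0': "0 \<le> Kv" unfolding Kv_def by (rule max.cobounded2)
  obtain P :: "((('x \<Rightarrow>\<^sub>L real) \<Rightarrow>\<^sub>L real) \<Rightarrow>\<^sub>L 'x)" where
    P1: "\<And>x. blinfun_apply P (bidual_embed x) = x" and
    P2: "\<And>g. g \<in> carrier G \<Longrightarrow> P o\<^sub>L dual_map (dual_map (u g)) = u g o\<^sub>L P"
    using assms(4) unfolding G_complemented_in_bidual_def by blast
  have lin_i: "linear \<iota>" and inj_i: "inj \<iota>"
    and linU: "\<And>g. g \<in> carrier G \<Longrightarrow> linear (U g)"
    and U_mult: "\<And>g h. g \<in> carrier G \<Longrightarrow> h \<in> carrier G \<Longrightarrow> U (g \<otimes>\<^bsub>G\<^esub> h) = U g \<circ> U h"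
    and U_i: "\<And>g x. g \<in> carrier G \<Longrightarrow> U g (\<iota> x) = \<iota> (u g x)"
    using assms(5) unfolding extended_action_def by blast+
  have sub: "subspace Y00" and vY: "\<And>g y. g \<in> carrier G \<Longrightarrow> y \<in> Y00 \<Longrightarrow> v g y \<in> Y00"
    using assms(6) unfolding admissible_domain_def by blast+
  have homO: "\<And>r y. y \<in> Y00 \<Longrightarrow> \<Omega> (r *\<^sub>R y) = r *\<^sub>R \<Omega> y"
    using assms(7) unfolding quasi_linear_def homogeneous_on_def by blast
  obtain C00 where C00: "\<forall>y\<in>Y00. \<forall>y'\<in>Y00. in_X_le \<iota> (\<Omega> (y + y') - \<Omega> y - \<Omega> y') (C00 * (norm y + norm y'))"
    using assms(7) unfolding quasi_linear_def by (elim conjE exE)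
  define C0 where "C0 = \<bar>C00\<bar>"
  have C0: "\<And>y y'. y \<in> Y00 \<Longrightarrow> y' \<in> Y00 \<Longrightarrow> \<exists>x. \<iota> x = \<Omega> (y + y') - \<Omega> y - \<Omega> y' \<and> norm x \<le> C0 * (norm y + norm y')"
  proof -
    fix y y' assume yy: "y \<in> Y00" "y' \<in> Y00"
    have "in_X_le \<iota> (\<Omega> (y + y') - \<Omega> y - \<Omega> y') (C00 * (norm y + norm y'))" using C00 yy by blast
    then obtain x where x1: "\<iota> x = \<Omega> (y + y') - \<Omega> y - \<Omega> y'" and x2: "norm x \<le> C00 * (norm y + norm y')"
      unfolding in_X_le_def by (elim exE conjE)
    have "C00 * (norm y + norm y') \<le> C0 * (norm y + norm y')" unfolding C0_def
      by (rule mult_right_mono[OF abs_ge_self]) simp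
    with x2 have "norm x \<le> C0 * (norm y + norm y')" by (rule order_trans)
    with x1 show "\<exists>x. \<iota> x = \<Omega> (y + y') - \<Omega> y - \<Omega> y' \<and> norm x \<le> C0 * (norm y + norm y')" by blast
  qed
  have C0pos: "0 \<le> C0" unfolding C0_def by simp
  obtain Cc0 where Cc0: "\<forall>g\<in>carrier G. \<forall>y\<in>Y00. in_X_le \<iota> (U g (\<Omega> y) - \<Omega> (v g y)) (Cc0 * norm y)"
    using assms(8) unfolding G_centralizer_def by (elim exE)
  define Cc where "Cc = \<bar>Cc0\<bar>"
  have cen: "\<And>g y. g \<in> carrier G \<Longrightarrow> y \<in> Y00 \<Longrightarrow> \<exists>x. \<iota> x = U g (\<Omega> y) - \<Omega> (v g y) \<and> norm x \<le> Cc * norm y"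
  proof -
    fix g y assume gy: "g \<in> carrier G" "y \<in> Y00"
    have "in_X_le \<iota> (U g (\<Omega> y) - \<Omega> (v g y)) (Cc0 * norm y)" using Cc0 gy by blast
    then obtain x where x1: "\<iota> x = U g (\<Omega> y) - \<Omega> (v g y)" and x2: "norm x \<le> Cc0 * norm y"
      unfolding in_X_le_def by (elim exE conjE)
    have "Cc0 * norm y \<le> Cc * norm y" unfolding Cc_def
      by (rule mult_right_mono[OF abs_ge_self norm_ge_zero])
    with x2 have "norm x \<le> Cc * norm y" by (rule order_trans)
    with x1 show "\<exists>x. \<iota> x = U g (\<Omega> y) - \<Omega> (v g y) \<and> norm x \<le> Cc * norm y" by blast
  qed
  have Ccpos: "0 \<le> Cc" unfolding Cc_def by simp

  define e where "e = \<one>\<^bsub>G\<^esub>"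
  have e: "e \<in> carrier G" unfolding e_def by simp
  have Ucomp: "\<And>g h z. g \<in> carrier G \<Longrightarrow> h \<in> carrier G \<Longrightarrow> U g (U h z) = U (g \<otimes>\<^bsub>G\<^esub> h) z"
    using U_mult by simp
  have vcomp: "\<And>g h y. g \<in> carrier G \<Longrightarrow> h \<in> carrier G \<Longrightarrow> v g (v h y) = v (g \<otimes>\<^bsub>G\<^esub> h) y"
    using v_mult by simp
  have Ue1: "\<And>h z. h \<in> carrier G \<Longrightarrow> U h (U e z) = U h z"
    using Ucomp e unfolding e_def by simp
  have Ue2: "\<And>h z. h \<in> carrier G \<Longrightarrow> U e (U h z) = U h z"
    using Ucomp e unfolding e_def by simp
  have ve2: "\<And>h y. h \<in> carrier G \<Longrightarrow> v e (v h y) = v h y"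
    using vcomp e unfolding e_def by simp
  have O0: "\<Omega> 0 = 0"
    using homO[of 0 0] subspace_0[OF sub] by simp

  define D where "D g y = inv_into UNIV \<iota> (U g (\<Omega> (v (inv\<^bsub>G\<^esub> g) y)) - U e (\<Omega> y))" for g y
  have D: "\<iota> (D g y) = U g (\<Omega> (v (inv\<^bsub>G\<^esub> g) y)) - U e (\<Omega> y) \<and> norm (D g y) \<le> Ku * Cc * norm y"
    if g: "g \<in> carrier G" and y: "y \<in> Y00" for g y
  proof -
    have ig: "inv\<^bsub>G\<^esub> g \<in> carrier G" using g by simp
    obtain x where x: "\<iota> x = U (inv\<^bsub>G\<^esub> g) (\<Omega> y) - \<Omega> (v (inv\<^bsub>G\<^esub> g) y)" "norm x \<le> Cc * norm y"
      using cen[OF ig y] by blast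
    have "U g (\<iota> x) = U g (U (inv\<^bsub>G\<^esub> g) (\<Omega> y)) - U g (\<Omega> (v (inv\<^bsub>G\<^esub> g) y))"
      using x(1) linear_diff[OF linU[OF g]] by simp
    also have "U g (U (inv\<^bsub>G\<^esub> g) (\<Omega> y)) = U e (\<Omega> y)"
      using Ucomp[OF g ig] g unfolding e_def by simp
    finally have "\<iota> (- u g x) = U g (\<Omega> (v (inv\<^bsub>G\<^esub> g) y)) - U e (\<Omega> y)"
      using U_i[OF g] linear_neg[OF lin_i] by simp
    hence eq: "D g y = - u g x" unfolding D_def using inj_i by (metis inv_f_f)
    have "norm (u g x) \<le> norm (u g) * norm x" by (rule norm_blinfun)
    also have "\<dots> \<le> Ku * (Cc * norm y)"
      using Ku[OF g] x(2) by (simp add: mult_mono Ku0')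
    finally show ?thesis using eq \<open>\<iota> (- u g x) = _\<close> by (simp add: mult.assoc)
  qed
  have Dphi: "\<bar>blinfun_apply \<phi> (D g y)\<bar> \<le> norm \<phi> * (Ku * Cc * norm y)"
    if g: "g \<in> carrier G" and y: "y \<in> Y00" for g y and \<phi> :: "'x \<Rightarrow>\<^sub>L real"
  proof -
    have "\<bar>blinfun_apply \<phi> (D g y)\<bar> \<le> norm \<phi> * norm (D g y)" using norm_blinfun[of \<phi> "D g y"] by simp
    also have "\<dots> \<le> norm \<phi> * (Ku * Cc * norm y)" using D[OF g y] by (simp add: mult_left_mono)
    finally show ?thesis .
  qed
  have Dbd: "bounded ((\<lambda>g. blinfun_apply \<phi> (D g y)) ` carrier G)" if y: "y \<in> Y00" for y and \<phi> :: "'x \<Rightarrow>\<^sub>L real"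
    by (rule bounded_on_carrier[of _ _ "norm \<phi> * (Ku * Cc * norm y)"]) (use Dphi[OF _ y] in blast)

  define Mf where "Mf y \<phi> = m (\<lambda>g. blinfun_apply \<phi> (D g y))" for y \<phi>
  have Mf_bl: "bounded_linear (Mf y)" if y: "y \<in> Y00" for y
  proof (rule bounded_linear_intro[where K = "Ku * Cc * norm y"])
    fix \<phi> \<psi> :: "'x \<Rightarrow>\<^sub>L real"
    have "Mf y (\<phi> + \<psi>) = m (\<lambda>g. 1 * blinfun_apply \<phi> (D g y) + 1 * blinfun_apply \<psi> (D g y))"
      unfolding Mf_def by (simp add: plus_blinfun.rep_eq)
    also have "\<dots> = Mf y \<phi> + Mf y \<psi>" unfolding Mf_def using m_lin[OF Dbd[OF y, of \<phi>] Dbd[OF y, of \<psi>], of 1 1] by simp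
    finally show "Mf y (\<phi> + \<psi>) = Mf y \<phi> + Mf y \<psi>" .
  next
    fix r :: real and \<phi> :: "'x \<Rightarrow>\<^sub>L real"
    have "Mf y (r *\<^sub>R \<phi>) = m (\<lambda>g. r * blinfun_apply \<phi> (D g y) + 0 * blinfun_apply \<phi> (D g y))"
      unfolding Mf_def by (simp add: scaleR_blinfun.rep_eq)
    also have "\<dots> = r *\<^sub>R Mf y \<phi>" unfolding Mf_def using m_lin[OF Dbd[OF y, of \<phi>] Dbd[OF y, of \<phi>], of r 0] by simp
    finally show "Mf y (r *\<^sub>R \<phi>) = r *\<^sub>R Mf y \<phi>" .
  next
    fix \<phi> :: "'x \<Rightarrow>\<^sub>L real"
    have "\<bar>Mf y \<phi>\<bar> \<le> norm \<phi> * (Ku * Cc * norm y)" unfolding Mf_def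
      by (rule mean_bound[OF m]) (use Dphi[OF _ y] in blast)
    thus "norm (Mf y \<phi>) \<le> norm \<phi> * (Ku * Cc * norm y)" by simp
  qed
  define M where "M y = Blinfun (Mf y)" for y
  have M_apply: "blinfun_apply (M y) = Mf y" if "y \<in> Y00" for y
    unfolding M_def using Mf_bl[OF that] by (rule bounded_linear_Blinfun_apply)
  have M_norm: "norm (M y) \<le> Ku * Cc * norm y" if y: "y \<in> Y00" for y
  proof (rule norm_blinfun_bound)
    show "0 \<le> Ku * Cc * norm y" using Ku0' Ccpos by simp
    fix \<phi>
    have "\<bar>Mf y \<phi>\<bar> \<le> norm \<phi> * (Ku * Cc * norm y)" unfolding Mf_def
      by (rule mean_bound[OF m]) (use Dphi[OF _ y] in blast)
    thus "norm (blinfun_apply (M y) \<phi>) \<le> Ku * Cc * norm y * norm \<phi>"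
      using M_apply[OF y] by (simp add: mult.commute)
  qed

  define W where "W y = \<Omega> (y - v e y) - U e (\<Omega> (y - v e y))" for y
  define \<omega> where "\<omega> y = W y + U e (\<Omega> y) + \<iota> (P (M y))" for y

  have linUe: "linear (U e)" using linU[OF e] .
  have comb: "\<omega> (a *\<^sub>R y + b *\<^sub>R y') = a *\<^sub>R \<omega> y + b *\<^sub>R \<omega> y'"
    if y: "y \<in> Y00" and y': "y' \<in> Y00"
      and H: "\<forall>w\<in>Y00. \<forall>w'\<in>Y00. \<Omega> (a *\<^sub>R w + b *\<^sub>R w') = a *\<^sub>R \<Omega> w + b *\<^sub>R \<Omega> w'" for a b y y'
  proof -
    let ?z = "a *\<^sub>R y + b *\<^sub>R y'"
    have z: "?z \<in> Y00" using sub y y' by (simp add: subspace_add subspace_scale)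
    have Ulin: "\<And>g p q. g \<in> carrier G \<Longrightarrow> U g (a *\<^sub>R p + b *\<^sub>R q) = a *\<^sub>R U g p + b *\<^sub>R U g q"
      using linU by (simp add: linear_add linear_scale)
    have ilin: "\<And>p q. \<iota> (a *\<^sub>R p + b *\<^sub>R q) = a *\<^sub>R \<iota> p + b *\<^sub>R \<iota> q"
      using lin_i by (simp add: linear_add linear_scale)
    have ay: "y - v e y \<in> Y00" "y' - v e y' \<in> Y00" using sub y y' vY[OF e] by (simp_all add: subspace_diff)
    have eqz: "?z - v e ?z = a *\<^sub>R (y - v e y) + b *\<^sub>R (y' - v e y')"
      by (simp add: blinfun.add_right blinfun.scaleR_right algebra_simps)
    have Oz: "\<Omega> (?z - v e ?z) = a *\<^sub>R \<Omega> (y - v e y) + b *\<^sub>R \<Omega> (y' - v e y')"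
      unfolding eqz using H ay by blast
    have Wz: "W ?z = a *\<^sub>R W y + b *\<^sub>R W y'"
      unfolding W_def Oz Ulin[OF e] by (simp add: algebra_simps)
    have UOz: "U e (\<Omega> ?z) = a *\<^sub>R U e (\<Omega> y) + b *\<^sub>R U e (\<Omega> y')"
      using H y y' Ulin[OF e] by simp
    have Dz: "D g ?z = a *\<^sub>R D g y + b *\<^sub>R D g y'" if g: "g \<in> carrier G" for g
    proof -
      have ig: "inv\<^bsub>G\<^esub> g \<in> carrier G" using g by simp
      have "v (inv\<^bsub>G\<^esub> g) ?z = a *\<^sub>R v (inv\<^bsub>G\<^esub> g) y + b *\<^sub>R v (inv\<^bsub>G\<^esub> g) y'"
        by (simp add: blinfun.add_right blinfun.scaleR_right)
      hence "\<Omega> (v (inv\<^bsub>G\<^esub> g) ?z) = a *\<^sub>R \<Omega> (v (inv\<^bsub>G\<^esub> g) y) + b *\<^sub>R \<Omega> (v (inv\<^bsub>G\<^esub> g) y')"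
        using H vY[OF ig y] vY[OF ig y'] by simp
      hence "\<iota> (D g ?z) = U g (a *\<^sub>R \<Omega> (v (inv\<^bsub>G\<^esub> g) y) + b *\<^sub>R \<Omega> (v (inv\<^bsub>G\<^esub> g) y')) - (a *\<^sub>R U e (\<Omega> y) + b *\<^sub>R U e (\<Omega> y'))"
        using D[OF g z] UOz by simp
      also have "\<dots> = a *\<^sub>R (U g (\<Omega> (v (inv\<^bsub>G\<^esub> g) y)) - U e (\<Omega> y)) + b *\<^sub>R (U g (\<Omega> (v (inv\<^bsub>G\<^esub> g) y')) - U e (\<Omega> y'))"
        unfolding Ulin[OF g] by (simp add: algebra_simps)
      also have "\<dots> = a *\<^sub>R \<iota> (D g y) + b *\<^sub>R \<iota> (D g y')"
        using D[OF g y] D[OF g y'] by simp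
      also have "\<dots> = \<iota> (a *\<^sub>R D g y + b *\<^sub>R D g y')" by (rule ilin[symmetric])
      finally have "\<iota> (D g ?z) = \<iota> (a *\<^sub>R D g y + b *\<^sub>R D g y')" .
      thus ?thesis using inj_i by (simp add: inj_eq)
    qed
    have Mz: "M ?z = a *\<^sub>R M y + b *\<^sub>R M y'"
    proof (rule blinfun_eqI)
      fix \<phi> :: "'x \<Rightarrow>\<^sub>L real"
      have "blinfun_apply (M ?z) \<phi> = m (\<lambda>g. blinfun_apply \<phi> (D g ?z))"
        using M_apply[OF z] unfolding Mf_def by simp
      also have "\<dots> = m (\<lambda>g. a * blinfun_apply \<phi> (D g y) + b * blinfun_apply \<phi> (D g y'))"
        by (rule m_cong[OF Dbd[OF z]]) (simp add: Dz blinfun.add_right blinfun.scaleR_right)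
      also have "\<dots> = a * Mf y \<phi> + b * Mf y' \<phi>"
        unfolding Mf_def by (rule m_lin[OF Dbd[OF y] Dbd[OF y']])
      also have "\<dots> = blinfun_apply (a *\<^sub>R M y + b *\<^sub>R M y') \<phi>"
        using M_apply[OF y] M_apply[OF y'] by (simp add: plus_blinfun.rep_eq scaleR_blinfun.rep_eq)
      finally show "blinfun_apply (M ?z) \<phi> = blinfun_apply (a *\<^sub>R M y + b *\<^sub>R M y') \<phi>" .
    qed
    have "\<iota> (P (M ?z)) = a *\<^sub>R \<iota> (P (M y)) + b *\<^sub>R \<iota> (P (M y'))"
      unfolding Mz by (simp add: blinfun.add_right blinfun.scaleR_right ilin)
    thus ?thesis unfolding \<omega>_def using Wz UOz by (simp add: algebra_simps)
  qed
  have hom: "homogeneous_on Y00 \<omega>" unfolding homogeneous_on_def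
  proof (intro allI ballI)
    fix r y assume y: "y \<in> Y00"
    have "\<omega> (r *\<^sub>R y + 0 *\<^sub>R y) = r *\<^sub>R \<omega> y + 0 *\<^sub>R \<omega> y"
      by (rule comb[OF y y]) (simp add: homO)
    thus "\<omega> (r *\<^sub>R y) = r *\<^sub>R \<omega> y" by simp
  qed
  have lin\<omega>: "linear_on Y00 \<omega>" if "linear_on Y00 \<Omega>"
    unfolding linear_on_def using comb that unfolding linear_on_def by blast

  have dist: "bounded_distance \<iota> Y00 \<Omega> \<omega>" unfolding bounded_distance_def
  proof (rule exI[of _ "C0 * (1 + 2 * Kv) * (1 + Ku) + Cc * Kv + norm P * (Ku * Cc)"], intro ballI)
    fix y assume y: "y \<in> Y00"
    define a where "a = y - v e y"
    define b where "b = v e y"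
    have ab: "a \<in> Y00" "b \<in> Y00" "a + b = y" unfolding a_def b_def
      using sub y vY[OF e] by (simp_all add: subspace_diff)
    obtain q1 where q1: "\<iota> q1 = \<Omega> (a + b) - \<Omega> a - \<Omega> b" "norm q1 \<le> C0 * (norm a + norm b)"
      using C0[OF ab(1) ab(2)] by blast
    obtain q2 where q2: "\<iota> q2 = U e (\<Omega> b) - \<Omega> (v e b)" "norm q2 \<le> Cc * norm b"
      using cen[OF e ab(2)] by blast
    have veb: "v e b = b" unfolding b_def using ve2[OF e] .
    have Ueq1: "\<iota> (u e q1) = U e (\<Omega> y) - U e (\<Omega> a) - U e (\<Omega> b)"
      using U_i[OF e, of q1, symmetric] q1(1) ab(3) linUe by (simp add: linear_diff)
    have "\<iota> (q1 - u e q1 - q2 - P (M y)) = \<iota> q1 - \<iota> (u e q1) - \<iota> q2 - \<iota> (P (M y))"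
      using lin_i by (simp add: linear_diff)
    also have "\<dots> = \<Omega> y - \<omega> y"
      unfolding Ueq1 q1(1) q2(1) veb \<omega>_def W_def a_def[symmetric] ab(3) by (simp add: algebra_simps)
    finally have eq: "\<iota> (q1 - u e q1 - q2 - P (M y)) = \<Omega> y - \<omega> y" .
    have nb: "norm b \<le> Kv * norm y"
      unfolding b_def by (rule order_trans[OF norm_blinfun mult_right_mono[OF Kv[OF e] norm_ge_zero]])
    have na: "norm a \<le> norm y + Kv * norm y"
      unfolding a_def using norm_triangle_ineq4[of y "v e y"] nb unfolding b_def by linarith
    have nq1: "norm q1 \<le> C0 * (1 + 2 * Kv) * norm y"
    proof -
      have ex1: "(1 + 2 * Kv) * norm y = norm y + Kv * norm y + Kv * norm y" by (simp add: algebra_simps)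
      have "norm a + norm b \<le> (1 + 2 * Kv) * norm y" unfolding ex1 using na nb by linarith
      hence "C0 * (norm a + norm b) \<le> C0 * ((1 + 2 * Kv) * norm y)" by (rule mult_left_mono[OF _ C0pos])
      thus ?thesis using q1(2) by (simp add: mult.assoc)
    qed
    have nuq1: "norm (u e q1) \<le> Ku * (C0 * (1 + 2 * Kv) * norm y)"
      by (rule order_trans[OF norm_blinfun mult_mono[OF Ku[OF e] nq1 Ku0' norm_ge_zero]])
    have nq2: "norm q2 \<le> Cc * (Kv * norm y)"
      using q2(2) mult_left_mono[OF nb Ccpos] by linarith
    have nP: "norm (P (M y)) \<le> norm P * (Ku * Cc * norm y)"
      by (rule order_trans[OF norm_blinfun mult_left_mono[OF M_norm[OF y] norm_ge_zero]])
    have t1: "norm (q1 - u e q1) \<le> norm q1 + norm (u e q1)" by (rule norm_triangle_ineq4)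
    have t2: "norm (q1 - u e q1 - q2) \<le> norm (q1 - u e q1) + norm q2" by (rule norm_triangle_ineq4)
    have t3: "norm (q1 - u e q1 - q2 - P (M y)) \<le> norm (q1 - u e q1 - q2) + norm (P (M y))" by (rule norm_triangle_ineq4)
    have ex: "(C0 * (1 + 2 * Kv) * (1 + Ku) + Cc * Kv + norm P * (Ku * Cc)) * norm y
       = C0 * (1 + 2 * Kv) * norm y + Ku * (C0 * (1 + 2 * Kv) * norm y) + Cc * (Kv * norm y) + norm P * (Ku * Cc * norm y)"
      by (simp add: algebra_simps)
    have "norm (q1 - u e q1 - q2 - P (M y)) \<le> (C0 * (1 + 2 * Kv) * (1 + Ku) + Cc * Kv + norm P * (Ku * Cc)) * norm y"
      unfolding ex using t1 t2 t3 nq1 nuq1 nq2 nP by linarith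
    thus "in_X_le \<iota> (\<Omega> y - \<omega> y) ((C0 * (1 + 2 * Kv) * (1 + Ku) + Cc * Kv + norm P * (Ku * Cc)) * norm y)"
      unfolding in_X_le_def using eq by blast
  qed

  have equiv: "G_equivariant_map G U v Y00 \<omega>" unfolding G_equivariant_map_def
  proof (intro ballI)
    fix h y assume h: "h \<in> carrier G" and y: "y \<in> Y00"
    have hy: "v h y \<in> Y00" using vY[OF h y] .
    obtain x where x: "\<iota> x = U h (\<Omega> y) - \<Omega> (v h y)" using cen[OF h y] by blast
    define c where "c = u e x"
    have "\<iota> c = U e (\<iota> x)" unfolding c_def by (rule U_i[OF e, symmetric])
    also have "\<dots> = U e (U h (\<Omega> y)) - U e (\<Omega> (v h y))" unfolding x by (rule linear_diff[OF linUe])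
    also have "\<dots> = U h (\<Omega> y) - U e (\<Omega> (v h y))" unfolding Ue2[OF h] ..
    finally have c: "\<iota> c = U h (\<Omega> y) - U e (\<Omega> (v h y))" .
    have Dsh: "D (h \<otimes>\<^bsub>G\<^esub> g) (v h y) = u h (D g y) + c" if g: "g \<in> carrier G" for g
    proof -
      have hg: "h \<otimes>\<^bsub>G\<^esub> g \<in> carrier G" using h g by simp
      have ig: "inv\<^bsub>G\<^esub> g \<in> carrier G" and ihg: "inv\<^bsub>G\<^esub> (h \<otimes>\<^bsub>G\<^esub> g) \<in> carrier G" using g hg by simp_all
      have grpeq: "inv\<^bsub>G\<^esub> (h \<otimes>\<^bsub>G\<^esub> g) \<otimes>\<^bsub>G\<^esub> h = inv\<^bsub>G\<^esub> g"
        using h g by (simp add: grp.inv_mult_group grp.m_assoc)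
      have vv: "v (inv\<^bsub>G\<^esub> (h \<otimes>\<^bsub>G\<^esub> g)) (v h y) = v (inv\<^bsub>G\<^esub> g) y"
        using vcomp[OF ihg h] grpeq by simp
      have UU: "U (h \<otimes>\<^bsub>G\<^esub> g) z = U h (U g z)" for z using Ucomp[OF h g] by simp
      have "\<iota> (D (h \<otimes>\<^bsub>G\<^esub> g) (v h y)) = U h (U g (\<Omega> (v (inv\<^bsub>G\<^esub> g) y))) - U e (\<Omega> (v h y))"
        using D[OF hg hy] vv UU by simp
      also have "\<dots> = (U h (U g (\<Omega> (v (inv\<^bsub>G\<^esub> g) y))) - U h (U e (\<Omega> y))) + (U h (\<Omega> y) - U e (\<Omega> (v h y)))"
        unfolding Ue1[OF h] by simp
      also have "\<dots> = U h (\<iota> (D g y)) + \<iota> c"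
        unfolding c linear_diff[OF linU[OF h], symmetric] using D[OF g y] by simp
      also have "\<dots> = \<iota> (u h (D g y) + c)"
        unfolding linear_add[OF lin_i] U_i[OF h] ..
      finally show ?thesis using inj_i by (simp add: inj_eq)
    qed
    have Mrel: "M (v h y) = dual_map (dual_map (u h)) (M y) + bidual_embed c"
    proof (rule blinfun_eqI)
      fix \<phi> :: "'x \<Rightarrow>\<^sub>L real"
      have bsh: "bounded ((\<lambda>g. blinfun_apply \<phi> (D (h \<otimes>\<^bsub>G\<^esub> g) (v h y))) ` carrier G)"
      proof (rule bounded_on_carrier[of _ _ "norm \<phi> * (Ku * Cc * norm (v h y))"], intro ballI)
        fix g assume g: "g \<in> carrier G"
        show "\<bar>blinfun_apply \<phi> (D (h \<otimes>\<^bsub>G\<^esub> g) (v h y))\<bar> \<le> norm \<phi> * (Ku * Cc * norm (v h y))"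
          using Dphi[OF grp.m_closed[OF h g] hy] .
      qed
      have "blinfun_apply (M (v h y)) \<phi> = m (\<lambda>g. blinfun_apply \<phi> (D g (v h y)))"
        using M_apply[OF hy] unfolding Mf_def by simp
      also have "\<dots> = m (\<lambda>g. blinfun_apply \<phi> (D (h \<otimes>\<^bsub>G\<^esub> g) (v h y)))"
        using m_inv[OF h Dbd[OF hy], of \<phi>] by simp
      also have "\<dots> = m (\<lambda>g. 1 * blinfun_apply (\<phi> o\<^sub>L u h) (D g y) + blinfun_apply \<phi> c * 1)"
        by (rule m_cong[OF bsh]) (simp add: Dsh blinfun.add_right)
      also have "\<dots> = 1 * Mf y (\<phi> o\<^sub>L u h) + blinfun_apply \<phi> c * m (\<lambda>_. 1)"
        unfolding Mf_def by (rule m_lin[OF Dbd[OF y] b_one])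
      also have "\<dots> = blinfun_apply (dual_map (dual_map (u h)) (M y) + bidual_embed c) \<phi>"
        using M_apply[OF y] m_one by (simp add: plus_blinfun.rep_eq dual_map_apply bidual_embed_apply)
      finally show "blinfun_apply (M (v h y)) \<phi> = blinfun_apply (dual_map (dual_map (u h)) (M y) + bidual_embed c) \<phi>" .
    qed
    have PM: "P (M (v h y)) = u h (P (M y)) + c"
    proof -
      have "P (dual_map (dual_map (u h)) (M y)) = blinfun_apply (P o\<^sub>L dual_map (dual_map (u h))) (M y)" by simp
      also have "\<dots> = u h (P (M y))" using P2[OF h] by simp
      finally show ?thesis unfolding Mrel using P1 by (simp add: blinfun.add_right)
    qed
    have "v h y - v e (v h y) = 0" unfolding ve2[OF h] by simp
    hence W0: "W (v h y) = 0" unfolding W_def by (simp only: O0 linear_0[OF linUe] diff_self)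
    have Wh: "U h (W y) = 0" unfolding W_def linear_diff[OF linU[OF h]] Ue1[OF h] by simp
    have "U h (\<omega> y) = U h (W y) + U h (U e (\<Omega> y)) + U h (\<iota> (P (M y)))"
      unfolding \<omega>_def linear_add[OF linU[OF h]] ..
    also have "\<dots> = U h (\<Omega> y) + \<iota> (u h (P (M y)))" unfolding Wh Ue1[OF h] U_i[OF h] by simp
    also have "\<dots> = \<omega> (v h y)"
      unfolding \<omega>_def W0 PM linear_add[OF lin_i] c by simp
    finally show "U h (\<omega> y) = \<omega> (v h y)" .
  qed
  have ql: "quasi_linear \<iota> Y00 \<omega>" by (rule quasi_from_dist[OF lin_i sub hom assms(7) dist])
  show ?thesis
  proof (intro conjI impI)
    show "\<exists>\<omega>'. quasi_linear \<iota> Y00 \<omega>' \<and> G_equivariant_map G U v Y00 \<omega>' \<and> bounded_distance \<iota> Y00 \<Omega> \<omega>'"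
      by (rule exI[of _ \<omega>]) (intro conjI ql equiv dist)
    assume L: "linear_on Y00 \<Omega>"
    show "\<exists>\<omega>'. quasi_linear \<iota> Y00 \<omega>' \<and> linear_on Y00 \<omega>' \<and> G_equivariant_map G U v Y00 \<omega>' \<and> bounded_distance \<iota> Y00 \<Omega> \<omega>'"
      by (rule exI[of _ \<omega>]) (intro conjI ql equiv dist lin\<omega>[OF L])
  qed
qed

end
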